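(* Let $M$ be a generalized modularity matrix on $V$ with induced modularity function $Q$, and let $S_1,\dots,S_k$ ($k\ge1$) be pairwise disjoint nonempty subsets of $V$ such that $Q(S_i)>0$ for all $i$ and $Q(S_i,S_j)<0$ for all $i\neq j$. If there exist positive numbers $\alpha_1,\dots,\alpha_k$ such that $$\alpha_iQ(S_i)>\sum_{j\ne i}\alpha_j\,|Q(S_i,S_j)|\qquad\text{for all } i=1,\dots,k,$$ then $M$ has at least $k$ positive eigenvalues (counted with multiplicity).
   Context: Let $V=\{1,\dots,n\}$ and let $A\in\mathbb{R}^{n\times n}$ be the adjacency matrix of an undirected connected weighted graph on $V$, possibly with loops, i.e. $A$ is symmetric, entrywise nonnegative and irreducible. A generalized modularity matrix is any matrix $M=A+\Delta-\sigma vv^{\mathsf T}$ where $\Delta$ is a real diagonal matrix, $v\ne0$ is entrywise nonnegative, and $\sigma>0$. For $S\subseteq V$, $\mathbb{1}_S$ is its characteristic vector; $Q(S)=\mathbb{1}_S^{\mathsf T}M\mathbb{1}_S$, and for disjoint $S,T$, $Q(S,T)=\mathbb{1}_S^{\mathsf T}M\mathbb{1}_T$. *)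

theory Defs
  imports "Jordan_Normal_Form.Char_Poly"
begin

text \<open>Vertices are V = {0..<n} (0-indexed). Matrices are Jordan_Normal_Form matrices.\<close>

definition sym_mat :: "real mat \<Rightarrow> bool" where
  "sym_mat A \<longleftrightarrow> A\<^sup>T = A"

text \<open>Irreducibility of a nonnegative symmetric matrix: the weighted graph with an edge
  i -- j whenever A(i,j) > 0 is connected on {0..<n}.\<close>
definition adj_rel :: "nat \<Rightarrow> real mat \<Rightarrow> (nat \<times> nat) set" where
  "adj_rel n A = {(i, j). i < n \<and> j < n \<and> A $$ (i, j) > 0}"

definition irreducible_mat :: "nat \<Rightarrow> real mat \<Rightarrow> bool" where
  "irreducible_mat n A \<longleftrightarrow> (\<forall>i<n. \<forall>j<n. i \<noteq> j \<longrightarrow> (i, j) \<in> (adj_rel n A)\<^sup>+)"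

definition adjacency_matrix :: "nat \<Rightarrow> real mat \<Rightarrow> bool" where
  "adjacency_matrix n A \<longleftrightarrow> A \<in> carrier_mat n n \<and> sym_mat A \<and>
     (\<forall>i<n. \<forall>j<n. A $$ (i, j) \<ge> 0) \<and> irreducible_mat n A"

definition outer_prod :: "real vec \<Rightarrow> real vec \<Rightarrow> real mat" where
  "outer_prod v w = mat (dim_vec v) (dim_vec w) (\<lambda>(i, j). v $ i * w $ j)"

definition gen_modularity_matrix :: "nat \<Rightarrow> real mat \<Rightarrow> bool" where
  "gen_modularity_matrix n M \<longleftrightarrow>
     (\<exists>A Delta v \<sigma>. adjacency_matrix n A \<and> Delta \<in> carrier_mat n n \<and> diagonal_mat Delta \<and>
        v \<in> carrier_vec n \<and> v \<noteq> 0\<^sub>v n \<and> (\<forall>i<n. v $ i \<ge> 0) \<and> \<sigma> > 0 \<and>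
        M = A + Delta - \<sigma> \<cdot>\<^sub>m outer_prod v v)"

definition charvec :: "nat \<Rightarrow> nat set \<Rightarrow> real vec" where
  "charvec n S = vec n (\<lambda>i. if i \<in> S then 1 else 0)"

definition Qmod :: "real mat \<Rightarrow> nat set \<Rightarrow> nat set \<Rightarrow> real" where
  "Qmod M S T = charvec (dim_row M) S \<bullet> (M *\<^sub>v charvec (dim_col M) T)"

definition num_pos_eigenvalues :: "real mat \<Rightarrow> nat" where
  "num_pos_eigenvalues M =
     (\<Sum>a\<in>{a. a > 0 \<and> poly (char_poly M) a = 0}. order a (char_poly M))"

end

theory Submission
  imports Defs
begin

lemma amgm_aux:
  fixes a b x y :: real
  assumes "a > 0" "b > 0"
  shows "\<bar>x * y\<bar> \<le> (b * x^2 / a + a * y^2 / b) / 2"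
proof -
  have "0 \<le> (b * \<bar>x\<bar> - a * \<bar>y\<bar>)^2" by simp
  hence "2 * a * b * \<bar>x * y\<bar> \<le> b^2 * x^2 + a^2 * y^2"
    by (simp add: power2_eq_square abs_mult algebra_simps)
  hence "\<bar>x * y\<bar> \<le> (b^2 * x^2 + a^2 * y^2) / (2 * a * b)"
    using assms by (simp add: field_simps)
  also have "(b^2 * x^2 + a^2 * y^2) / (2 * a * b) = (b * x^2 / a + a * y^2 / b) / 2"
    using assms by (simp add: field_simps power2_eq_square)
  finally show ?thesis .
qed

lemma quad_pos:
  fixes B :: "nat \<Rightarrow> nat \<Rightarrow> real" and \<alpha> c :: "nat \<Rightarrow> real"
  assumes sym: "\<forall>i<k. \<forall>j<k. B i j = B j i"
    and apos: "\<forall>i<k. \<alpha> i > 0"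
    and dom: "\<forall>i<k. \<alpha> i * B i i > (\<Sum>j\<in>{0..<k}-{i}. \<alpha> j * \<bar>B i j\<bar>)"
    and c: "\<exists>i<k. c i \<noteq> 0"
  shows "(\<Sum>i<k. \<Sum>j<k. c i * c j * B i j) > 0"
proof -
  define T where "T = (\<Sum>i<k. \<Sum>j<k. if j = i then 0 else \<bar>B i j\<bar> * (\<alpha> j * (c i)^2 / \<alpha> i))"
  define T' where "T' = (\<Sum>i<k. \<Sum>j<k. if j = i then 0 else \<bar>B i j\<bar> * (\<alpha> i * (c j)^2 / \<alpha> j))"
  have TT': "T' = T"
  proof -
    have "T' = (\<Sum>j<k. \<Sum>i<k. if j = i then 0 else \<bar>B i j\<bar> * (\<alpha> i * (c j)^2 / \<alpha> j))"
      unfolding T'_def by (rule sum.swap)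
    also have "\<dots> = T" unfolding T_def
      by (intro sum.cong refl, use sym in auto)
    finally show ?thesis .
  qed
  have split: "(\<Sum>j<k. c i * c j * B i j) = (c i)^2 * B i i + (\<Sum>j<k. if j = i then 0 else c i * c j * B i j)"
    if "i < k" for i
  proof -
    have "(\<Sum>j<k. c i * c j * B i j) = (\<Sum>j<k. (if j = i then c i * c j * B i j else 0) + (if j = i then 0 else c i * c j * B i j))"
      by (intro sum.cong refl) auto
    also have "\<dots> = (c i)^2 * B i i + (\<Sum>j<k. if j = i then 0 else c i * c j * B i j)"
      using that by (simp add: sum.distrib power2_eq_square)
    finally show ?thesis .
  qed
  have lower: "(\<Sum>i<k. \<Sum>j<k. c i * c j * B i j) \<ge> (\<Sum>i<k. (c i)^2 * B i i) - (T + T') / 2"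
  proof -
    have "(\<Sum>i<k. \<Sum>j<k. c i * c j * B i j) = (\<Sum>i<k. (c i)^2 * B i i) + (\<Sum>i<k. \<Sum>j<k. if j = i then 0 else c i * c j * B i j)"
      by (simp add: split sum.distrib)
    moreover have "(\<Sum>i<k. \<Sum>j<k. if j = i then 0 else c i * c j * B i j) \<ge> - (T + T') / 2"
    proof -
      have ineq: "(\<Sum>i<k. \<Sum>j<k. if j = i then 0 else c i * c j * B i j) \<ge>
        (\<Sum>i<k. \<Sum>j<k. - ((if j = i then 0 else \<bar>B i j\<bar> * (\<alpha> j * (c i)^2 / \<alpha> i)) + (if j = i then 0 else \<bar>B i j\<bar> * (\<alpha> i * (c j)^2 / \<alpha> j))) / 2)"
      proof (intro sum_mono)
        fix i j assume i: "i \<in> {..<k}" and j: "j \<in> {..<k}"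
        show "- ((if j = i then 0 else \<bar>B i j\<bar> * (\<alpha> j * (c i)\<^sup>2 / \<alpha> i)) + (if j = i then 0 else \<bar>B i j\<bar> * (\<alpha> i * (c j)\<^sup>2 / \<alpha> j))) / 2
              \<le> (if j = i then 0 else c i * c j * B i j)"
        proof (cases "j = i")
          case False
          have a: "\<bar>c i * c j\<bar> \<le> (\<alpha> j * (c i)^2 / \<alpha> i + \<alpha> i * (c j)^2 / \<alpha> j) / 2"
            using amgm_aux[of "\<alpha> i" "\<alpha> j" "c i" "c j"] apos i j by auto
          have "- (c i * c j * B i j) \<le> \<bar>c i * c j\<bar> * \<bar>B i j\<bar>"
            by (metis abs_ge_minus_self abs_mult)
          also have "\<dots> \<le> (\<alpha> j * (c i)^2 / \<alpha> i + \<alpha> i * (c j)^2 / \<alpha> j) / 2 * \<bar>B i j\<bar>"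
            by (rule mult_right_mono[OF a], simp)
          finally show ?thesis using False by (simp add: algebra_simps)
        qed simp
      qed
      have eq: "(\<Sum>i<k. \<Sum>j<k. - ((if j = i then 0 else \<bar>B i j\<bar> * (\<alpha> j * (c i)^2 / \<alpha> i)) + (if j = i then 0 else \<bar>B i j\<bar> * (\<alpha> i * (c j)^2 / \<alpha> j))) / 2) = - (T + T') / 2"
      proof -
        have "(\<Sum>i<k. \<Sum>j<k. - ((if j = i then 0 else \<bar>B i j\<bar> * (\<alpha> j * (c i)^2 / \<alpha> i)) + (if j = i then 0 else \<bar>B i j\<bar> * (\<alpha> i * (c j)^2 / \<alpha> j))) / 2) = (\<Sum>i<k. \<Sum>j<k. (-1/2) * (if j = i then 0 else \<bar>B i j\<bar> * (\<alpha> j * (c i)^2 / \<alpha> i)) + (-1/2) * (if j = i then 0 else \<bar>B i j\<bar> * (\<alpha> i * (c j)^2 / \<alpha> j)))"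
          by (intro sum.cong refl) simp
        also have "\<dots> = (-1/2) * T + (-1/2) * T'"
          unfolding T_def T'_def by (simp only: sum.distrib sum_distrib_left)
        finally show ?thesis by simp
      qed
      show ?thesis using ineq eq by linarith
    qed
    ultimately show ?thesis by linarith
  qed
  have Tless: "T < (\<Sum>i<k. (c i)^2 * B i i)"
  proof -
    have "T = (\<Sum>i<k. (c i)^2 / \<alpha> i * (\<Sum>j\<in>{0..<k}-{i}. \<alpha> j * \<bar>B i j\<bar>))"
      unfolding T_def
    proof (intro sum.cong refl)
      fix i assume i: "i \<in> {..<k}"
      have "(\<Sum>j<k. if j = i then 0 else \<bar>B i j\<bar> * (\<alpha> j * (c i)\<^sup>2 / \<alpha> i))
          = (\<Sum>j\<in>{0..<k}-{i}. \<bar>B i j\<bar> * (\<alpha> j * (c i)\<^sup>2 / \<alpha> i))"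
        using i by (simp add: sum.If_cases lessThan_atLeast0 Diff_eq Int_commute)
      also have "\<dots> = (c i)^2 / \<alpha> i * (\<Sum>j\<in>{0..<k}-{i}. \<alpha> j * \<bar>B i j\<bar>)"
        by (simp add: sum_distrib_left algebra_simps)
      finally show "(\<Sum>j<k. if j = i then 0 else \<bar>B i j\<bar> * (\<alpha> j * (c i)\<^sup>2 / \<alpha> i)) = (c i)^2 / \<alpha> i * (\<Sum>j\<in>{0..<k}-{i}. \<alpha> j * \<bar>B i j\<bar>)" .
    qed
    also have "\<dots> < (\<Sum>i<k. (c i)^2 * B i i)"
    proof (rule sum_strict_mono_ex1)
      show "finite {..<k}" by simp
      show "\<forall>i\<in>{..<k}. (c i)^2 / \<alpha> i * (\<Sum>j\<in>{0..<k}-{i}. \<alpha> j * \<bar>B i j\<bar>) \<le> (c i)^2 * B i i"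
      proof
        fix i assume i: "i \<in> {..<k}"
        have "(c i)^2 / \<alpha> i * (\<Sum>j\<in>{0..<k}-{i}. \<alpha> j * \<bar>B i j\<bar>) \<le> (c i)^2 / \<alpha> i * (\<alpha> i * B i i)"
          using dom apos i by (intro mult_left_mono) (auto intro: less_imp_le)
        also have "\<dots> = (c i)^2 * B i i" using apos i by (simp add: less_imp_neq[symmetric])
        finally show "(c i)^2 / \<alpha> i * (\<Sum>j\<in>{0..<k}-{i}. \<alpha> j * \<bar>B i j\<bar>) \<le> (c i)^2 * B i i" .
      qed
      from c obtain i where i: "i < k" "c i \<noteq> 0" by auto
      have "(c i)^2 / \<alpha> i * (\<Sum>j\<in>{0..<k}-{i}. \<alpha> j * \<bar>B i j\<bar>) < (c i)^2 / \<alpha> i * (\<alpha> i * B i i)"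
        using dom apos i by (intro mult_strict_left_mono) auto
      also have "\<dots> = (c i)^2 * B i i" using apos i by (simp add: less_imp_neq[symmetric])
      finally show "\<exists>i\<in>{..<k}. (c i)^2 / \<alpha> i * (\<Sum>j\<in>{0..<k}-{i}. \<alpha> j * \<bar>B i j\<bar>) < (c i)^2 * B i i"
        using i by auto
    qed
    finally show ?thesis .
  qed
  have "(\<Sum>i<k. (c i)^2 * B i i) - T \<le> (\<Sum>i<k. \<Sum>j<k. c i * c j * B i j)" using lower unfolding TT' by simp
  then show ?thesis using Tless by linarith
qed


lemma hom_sys:
  fixes a :: "nat \<Rightarrow> nat \<Rightarrow> real"
  assumes "finite I" "finite J" "card I < card J"
  shows "\<exists>c. (\<exists>j\<in>J. c j \<noteq> 0) \<and> (\<forall>i\<in>I. (\<Sum>j\<in>J. a i j * c j) = 0)"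
  using assms
proof (induction I arbitrary: J a rule: finite_induct)
  case empty
  then obtain j where "j \<in> J" by (metis card.empty all_not_in_conv less_irrefl)
  then show ?case by (intro exI[of _ "\<lambda>_. 1"]) auto
next
  case (insert i0 I)
  show ?case
  proof (cases "\<forall>j\<in>J. a i0 j = 0")
    case True
    have "card I < card J" using insert by simp
    from insert.IH[OF insert.prems(1) this, of a] obtain c where
      c: "(\<exists>j\<in>J. c j \<noteq> 0)" "(\<forall>i\<in>I. (\<Sum>j\<in>J. a i j * c j) = 0)" by blast
    then show ?thesis using True by (intro exI[of _ c]) auto
  next
    case False
    then obtain j0 where j0: "j0 \<in> J" "a i0 j0 \<noteq> 0" by auto
    define J' where "J' = J - {j0}"
    have fJ': "finite J'" using insert by (simp add: J'_def)
    have cJ': "card I < card J'" using insert j0 by (simp add: J'_def)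
    define a' where "a' i j = a i j - a i j0 * a i0 j / a i0 j0" for i j
    from insert.IH[OF fJ' cJ', of a'] obtain c' where
      c': "(\<exists>j\<in>J'. c' j \<noteq> 0)" "(\<forall>i\<in>I. (\<Sum>j\<in>J'. a' i j * c' j) = 0)" by blast
    define c where "c j = (if j = j0 then - (\<Sum>j\<in>J'. a i0 j * c' j) / a i0 j0 else c' j)" for j
    have Jsplit: "(\<Sum>j\<in>J. f j) = f j0 + (\<Sum>j\<in>J'. f j)" for f :: "nat \<Rightarrow> real"
      unfolding J'_def using j0 insert by (simp add: sum.remove)
    have cJ'eq: "(\<Sum>j\<in>J'. g j * c j) = (\<Sum>j\<in>J'. g j * c' j)" for g
      by (intro sum.cong refl) (auto simp: c_def J'_def)
    show ?thesis
    proof (intro exI[of _ c] conjI ballI)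
      from c' obtain j where "j \<in> J'" "c' j \<noteq> 0" by auto
      then show "\<exists>j\<in>J. c j \<noteq> 0" by (intro bexI[of _ j]) (auto simp: c_def J'_def)
    next
      fix i assume "i \<in> insert i0 I"
      then consider "i = i0" | "i \<in> I" by auto
      then show "(\<Sum>j\<in>J. a i j * c j) = 0"
      proof cases
        case 1
        then show ?thesis using j0 by (simp add: Jsplit cJ'eq, simp add: c_def)
      next
        case 2
        have "(\<Sum>j\<in>J. a i j * c j) = a i j0 * c j0 + (\<Sum>j\<in>J'. a i j * c' j)"
          by (simp add: Jsplit cJ'eq)
        also have "\<dots> = (\<Sum>j\<in>J'. a' i j * c' j)"
          unfolding a'_def c_def using j0
          by (simp add: sum_distrib_left sum_divide_distrib algebra_simps sum_subtractf sum_negf)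
        also have "\<dots> = 0" using c' 2 by auto
        finally show ?thesis .
      qed
    qed
  qed
qed


lemma order_prod_linear:
  fixes d :: "nat \<Rightarrow> real"
  shows "order a (\<Prod>i<n. [:-d i, 1:]) = card {i. i < n \<and> d i = a}"
proof (induction n)
  case 0
  then show ?case by (simp add: order_0I)
next
  case (Suc n)
  have nz: "(\<Prod>i<n. [:-d i, 1:]) * [:-d n, 1:] \<noteq> 0"
  proof -
    have "(\<Prod>i<n. [:-d i, 1:]) \<noteq> 0"
      by (subst prod_zero_iff) auto
    moreover have "[:-d n, 1:] \<noteq> 0" by simp
    ultimately show ?thesis by (simp only: mult_eq_0_iff) simp
  qed
  have "{i. i < Suc n \<and> d i = a} = {i. i < n \<and> d i = a} \<union> (if d n = a then {n} else {})"
    by (auto simp: less_Suc_eq)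
  hence "card {i. i < Suc n \<and> d i = a} = card {i. i < n \<and> d i = a} + (if d n = a then 1 else 0)"
    by auto
  moreover have "order a (\<Prod>i<Suc n. [:-d i, 1:]) = order a (\<Prod>i<n. [:-d i, 1:]) + order a [:-d n, 1:]"
    unfolding prod.lessThan_Suc by (rule order_mult[OF nz])
  ultimately show ?case using Suc by (simp add: order_linear')
qed

lemma num_pos_from_factor:
  fixes A :: "real mat" and d :: "nat \<Rightarrow> real"
  assumes cp: "char_poly A = (\<Prod>i<n. [:-d i, 1:])"
  shows "num_pos_eigenvalues A = card {i. i < n \<and> d i > 0}"
proof -
  let ?P = "{i. i < n \<and> d i > 0}"
  have R: "{a. a > 0 \<and> poly (char_poly A) a = 0} = d ` ?P"
    unfolding cp by (auto simp: poly_prod prod_zero_iff)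
  have "card ?P = (\<Sum>i\<in>?P. 1::nat)" by simp
  also have "\<dots> = (\<Sum>a\<in>d ` ?P. \<Sum>i\<in>{x \<in> ?P. d x = a}. 1)"
    by (rule sum.image_gen) simp
  also have "\<dots> = (\<Sum>a\<in>d ` ?P. order a (char_poly A))"
  proof (intro sum.cong refl)
    fix a assume "a \<in> d ` ?P"
    then have "a > 0" by auto
    then have "{x \<in> ?P. d x = a} = {i. i < n \<and> d i = a}" by auto
    then show "(\<Sum>i\<in>{x \<in> ?P. d x = a}. 1) = order a (char_poly A)"
      unfolding cp order_prod_linear by simp
  qed
  finally show ?thesis unfolding num_pos_eigenvalues_def R by simp
qed


lemma real_eigen:
  fixes A :: "real mat"
  assumes A: "A \<in> carrier_mat n n" and sym: "A\<^sup>T = A" and n: "n > 0"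
  shows "\<exists>e v. v \<in> carrier_vec n \<and> v \<noteq> 0\<^sub>v n \<and> A *\<^sub>v v = e \<cdot>\<^sub>v v"
proof -
  define Ac where "Ac = map_mat complex_of_real A"
  have Ac: "Ac \<in> carrier_mat n n" using A by (simp add: Ac_def)
  have Acij: "Ac $$ (i,j) = of_real (A $$ (i,j))" if "i < n" "j < n" for i j
    using A that by (simp add: Ac_def)
  have symA: "A $$ (i,j) = A $$ (j,i)" if "i < n" "j < n" for i j
    using arg_cong[OF sym, of "\<lambda>M. M $$ (i,j)"] A that by simp
  have cpAc: "char_poly Ac = map_poly of_real (char_poly A)"
    unfolding Ac_def by (rule of_real_hom.char_poly_hom[OF A])
  obtain as where as: "char_poly Ac = (\<Prod>a\<leftarrow>as. [:- a, 1:])" "length as = n"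
    using char_poly_factorized[OF Ac] by blast
  then obtain a rest where as2: "as = a # rest" using n by (cases as) auto
  have "poly (char_poly Ac) a = 0" unfolding as(1) as2 by simp
  hence "eigenvalue Ac a" using eigenvalue_root_char_poly[OF Ac] by simp
  then obtain z where z: "z \<in> carrier_vec n" "z \<noteq> 0\<^sub>v n" "Ac *\<^sub>v z = a \<cdot>\<^sub>v z"
    unfolding eigenvalue_def eigenvector_def using Ac by auto
  define N where "N = (\<Sum>i<n. cnj (z$i) * z$i)"
  define s where "s = (\<Sum>i<n. cnj (z$i) * (Ac *\<^sub>v z)$i)"
  have s1: "s = a * N"
    unfolding s_def N_def z(3) using z(1) by (simp add: sum_distrib_left algebra_simps)
  have Acz: "(Ac *\<^sub>v z)$i = (\<Sum>j<n. of_real (A $$ (i,j)) * z$j)" if "i < n" for i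
    using that Ac z(1) by (simp add: scalar_prod_def Acij lessThan_atLeast0)
  have s2: "s = (\<Sum>i<n. \<Sum>j<n. cnj (z$i) * of_real (A $$ (i,j)) * z$j)"
    unfolding s_def by (simp add: Acz sum_distrib_left algebra_simps)
  have "cnj s = (\<Sum>i<n. \<Sum>j<n. z$i * of_real (A $$ (i,j)) * cnj (z$j))"
    unfolding s2 by (simp add: cnj_sum)
  also have "\<dots> = (\<Sum>j<n. \<Sum>i<n. z$i * of_real (A $$ (i,j)) * cnj (z$j))"
    by (rule sum.swap)
  also have "\<dots> = s" unfolding s2
    by (intro sum.cong refl) (auto simp: symA algebra_simps)
  finally have cs: "cnj s = s" .
  have Nreal: "N = of_real (\<Sum>i<n. (cmod (z$i))^2)"
    unfolding N_def of_real_sum by (intro sum.cong refl) (simp add: complex_norm_square mult.commute del: of_real_power)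
  have "N \<noteq> 0"
  proof
    assume "N = 0"
    hence "(\<Sum>i<n. (cmod (z$i))^2) = 0" unfolding Nreal by (simp only: of_real_eq_0_iff)
    hence "\<forall>i\<in>{..<n}. (cmod (z$i))^2 = 0" by (subst (asm) sum_nonneg_eq_0_iff) auto
    hence "z = 0\<^sub>v n" using z(1) by (intro eq_vecI) auto
    thus False using z(2) by simp
  qed
  have "cnj a * N = a * N"
    using cs unfolding s1 Nreal by simp
  hence ca: "cnj a = a" using \<open>N \<noteq> 0\<close> by simp
  hence aRe: "a = of_real (Re a)" by (metis Reals_cnj_iff complex_is_Real_iff of_real_Re)
  have "poly (map_poly of_real (char_poly A)) (of_real (Re a) :: complex) = 0"
    using \<open>poly (char_poly Ac) a = 0\<close> cpAc aRe by simp
  hence "poly (char_poly A) (Re a) = 0" by (simp add: of_real_hom.poly_map_poly)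
  hence "eigenvalue A (Re a)" using eigenvalue_root_char_poly[OF A] by simp
  thus ?thesis unfolding eigenvalue_def eigenvector_def using A by auto
qed


lemma householder:
  fixes u :: "real vec"
  assumes u: "u \<in> carrier_vec n" and uu: "u \<bullet> u = 1" and u0: "u $ 0 \<le> 0" and n: "n > 0"
  shows "\<exists>H. H \<in> carrier_mat n n \<and> H\<^sup>T = H \<and> H * H = 1\<^sub>m n \<and> H *\<^sub>v unit_vec n 0 = u"
proof -
  define e0 :: "real vec" where "e0 = unit_vec n 0"
  have e0: "e0 \<in> carrier_vec n" by (simp add: e0_def)
  define w where "w = e0 - u"
  have w: "w \<in> carrier_vec n" using u e0 by (simp add: w_def)
  have e0e0: "e0 \<bullet> e0 = 1" using n by (simp add: e0_def)
  have e0u: "e0 \<bullet> u = u $ 0" using n u by (simp add: e0_def scalar_prod_left_unit)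
  have ue0: "u \<bullet> e0 = u $ 0" using e0u comm_scalar_prod[OF u e0] by simp
  have ww: "w \<bullet> w = 2 - 2 * u $ 0"
    unfolding w_def using u e0 e0e0 e0u ue0 uu
    by (simp add: scalar_prod_minus_distrib minus_scalar_prod_distrib)
  have wpos: "w \<bullet> w > 0" using ww u0 by simp
  define c where "c = 2 / (w \<bullet> w)"
  have cww: "c * (w \<bullet> w) = 2" using wpos by (simp add: c_def)
  define H where "H = mat n n (\<lambda>(i,j). (if i = j then 1 else 0) - c * w$i * w$j)"
  have H: "H \<in> carrier_mat n n" by (simp add: H_def)
  have Hx_idx: "(H *\<^sub>v x) $ i = x $ i - c * w $ i * (w \<bullet> x)" if x: "x \<in> carrier_vec n" and i: "i < n" for x i
  proof -
    have "(H *\<^sub>v x) $ i = (\<Sum>j = 0..<n. ((if i = j then 1 else 0) - c * w$i * w$j) * x $ j)"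
      using x i H by (simp add: H_def scalar_prod_def)
    also have "\<dots> = (\<Sum>j = 0..<n. (if i = j then x $ j else 0) - (c * w $ i) * (w $ j * x $ j))"
      by (intro sum.cong refl) (auto simp: algebra_simps)
    also have "\<dots> = (\<Sum>j = 0..<n. (if i = j then x $ j else 0)) - c * w $ i * (\<Sum>j = 0..<n. w $ j * x $ j)"
      by (simp only: sum_subtractf sum_distrib_left)
    also have "\<dots> = x $ i - c * w $ i * (w \<bullet> x)"
      using i x by (simp add: scalar_prod_def)
    finally show ?thesis .
  qed
  have Hx: "H *\<^sub>v x = x - (c * (w \<bullet> x)) \<cdot>\<^sub>v w" if x: "x \<in> carrier_vec n" for x
    by (rule eq_vecI) (use x w H Hx_idx in auto)
  have HHx: "H *\<^sub>v (H *\<^sub>v x) = x" if x: "x \<in> carrier_vec n" for x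
  proof -
    have Hxc: "H *\<^sub>v x \<in> carrier_vec n" using H x by simp
    have "w \<bullet> (H *\<^sub>v x) = (w \<bullet> x) - c * (w \<bullet> x) * (w \<bullet> w)"
      unfolding Hx[OF x] using w x by (simp add: scalar_prod_minus_distrib scalar_prod_smult_distrib)
    also have "\<dots> = - (w \<bullet> x)" using cww by (simp add: algebra_simps)
    finally have wHx: "w \<bullet> (H *\<^sub>v x) = - (w \<bullet> x)" .
    show ?thesis
    proof (rule eq_vecI)
      fix i assume "i < dim_vec x"
      hence i: "i < n" using x by simp
      show "(H *\<^sub>v (H *\<^sub>v x)) $ i = x $ i"
        unfolding Hx_idx[OF Hxc i] Hx_idx[OF x i] wHx by simp
    qed (use H x in simp)
  qed
  have Hsym: "H\<^sup>T = H" by (rule eq_matI) (auto simp: H_def)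
  have colH: "col H j = H *\<^sub>v unit_vec n j" if j: "j < n" for j
    by (rule eq_vecI) (use j H w in \<open>auto simp: Hx_idx scalar_prod_right_unit H_def\<close>)
  have HH: "H * H = 1\<^sub>m n"
  proof (rule eq_matI)
    fix i j assume i: "i < dim_row (1\<^sub>m n :: real mat)" and j: "j < dim_col (1\<^sub>m n :: real mat)"
    hence i: "i < n" and j: "j < n" by auto
    have "(H * H) $$ (i,j) = col (H * H) j $ i" using i j H by simp
    also have "\<dots> = (H *\<^sub>v col H j) $ i" by (subst col_mult2[OF H H j]) (rule refl)
    also have "\<dots> = (H *\<^sub>v (H *\<^sub>v unit_vec n j)) $ i" by (subst colH[OF j]) (rule refl)
    also have "\<dots> = unit_vec n j $ i" by (simp add: HHx)
    also have "\<dots> = (1\<^sub>m n :: real mat) $$ (i,j)" using i j by simp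
    finally show "(H * H) $$ (i,j) = (1\<^sub>m n :: real mat) $$ (i,j)" .
  qed (use H in auto)
  have "w \<bullet> e0 = 1 - u $ 0"
    unfolding w_def using u e0 e0e0 ue0 by (simp add: minus_scalar_prod_distrib)
  hence "c * (w \<bullet> e0) = 1" using ww wpos unfolding c_def by (simp add: field_simps)
  hence "H *\<^sub>v e0 = e0 - w" using Hx[OF e0] by simp
  also have "\<dots> = u" unfolding w_def using u e0 by auto
  finally have "H *\<^sub>v unit_vec n 0 = u" unfolding e0_def .
  thus ?thesis using H Hsym HH by blast
qed


lemma quad_split:
  fixes B :: "real mat" and z :: "real vec"
  assumes B: "B \<in> carrier_mat (Suc m) (Suc m)" and z: "z \<in> carrier_vec (Suc m)"
    and r0: "\<forall>j<m. B $$ (0, Suc j) = 0" and c0: "\<forall>i<m. B $$ (Suc i, 0) = 0"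
  shows "z \<bullet> (B *\<^sub>v z) = B $$ (0,0) * (z$0)^2 +
     vec m (\<lambda>i. z $ Suc i) \<bullet> (mat m m (\<lambda>(i,j). B $$ (Suc i, Suc j)) *\<^sub>v vec m (\<lambda>i. z $ Suc i))"
proof -
  have L: "z \<bullet> (B *\<^sub>v z) = (\<Sum>i=0..<Suc m. z$i * (\<Sum>j=0..<Suc m. B$$(i,j) * z$j))"
    using B z by (simp add: scalar_prod_def)
  have R: "vec m (\<lambda>i. z $ Suc i) \<bullet> (mat m m (\<lambda>(i,j). B $$ (Suc i, Suc j)) *\<^sub>v vec m (\<lambda>i. z $ Suc i))
     = (\<Sum>i=0..<m. z$Suc i * (\<Sum>j=0..<m. B$$(Suc i,Suc j) * z$Suc j))"
    by (simp add: scalar_prod_def)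
  have inner: "(\<Sum>j=0..<Suc m. B$$(Suc i,j) * z$j) = (\<Sum>j=0..<m. B$$(Suc i,Suc j) * z$Suc j)" if "i < m" for i
    using c0 that by (simp add: sum.atLeast0_lessThan_Suc_shift del: sum.op_ivl_Suc)
  have inner0: "(\<Sum>j=0..<Suc m. B$$(0,j) * z$j) = B$$(0,0) * z$0"
    using r0 by (simp add: sum.atLeast0_lessThan_Suc_shift del: sum.op_ivl_Suc)
  have "(\<Sum>i=0..<Suc m. z$i * (\<Sum>j=0..<Suc m. B$$(i,j) * z$j)) =
     z$0 * (\<Sum>j=0..<Suc m. B$$(0,j) * z$j) + (\<Sum>i=0..<m. z$Suc i * (\<Sum>j=0..<Suc m. B$$(Suc i,j) * z$j))"
    by (subst sum.atLeast0_lessThan_Suc_shift) (simp add: o_def)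
  also have "\<dots> = B $$ (0,0) * (z$0)^2 + (\<Sum>i=0..<m. z$Suc i * (\<Sum>j=0..<m. B$$(Suc i,Suc j) * z$Suc j))"
  proof -
    have "(\<Sum>i=0..<m. z$Suc i * (\<Sum>j=0..<Suc m. B$$(Suc i,j) * z$j)) = (\<Sum>i=0..<m. z$Suc i * (\<Sum>j=0..<m. B$$(Suc i,Suc j) * z$Suc j))"
      by (rule sum.cong[OF refl]) (simp add: inner del: sum.op_ivl_Suc)
    then show ?thesis unfolding inner0 by (simp add: power2_eq_square)
  qed
  finally show ?thesis unfolding L R .
qed


lemma spectral:
  fixes A :: "real mat"
  assumes "A \<in> carrier_mat n n" "A\<^sup>T = A"
  shows "\<exists>d p. char_poly A = (\<Prod>i<n. [:-d i, 1:]) \<and> (\<forall>i<n. p i \<in> carrier_vec n) \<and>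
     (\<forall>y\<in>carrier_vec n. y \<bullet> (A *\<^sub>v y) = (\<Sum>i<n. d i * (p i \<bullet> y)^2))"
  using assms
proof (induction n arbitrary: A)
  case 0
  have A: "A \<in> carrier_mat 0 0" using 0 by simp
  have ut: "upper_triangular A" using A by (auto simp: upper_triangular_def)
  have "char_poly A = 1"
    using char_poly_upper_triangular[OF A ut] A by (simp add: diag_mat_def)
  moreover have "y \<bullet> (A *\<^sub>v y) = 0" if "y \<in> carrier_vec 0" for y
    using that A by (simp add: scalar_prod_def)
  ultimately show ?case by auto
next
  case (Suc m A)
  define n where "n = Suc m"
  have A: "A \<in> carrier_mat n n" and sym: "A\<^sup>T = A" using Suc.prems by (auto simp: n_def)
  obtain e v where v: "v \<in> carrier_vec n" "v \<noteq> 0\<^sub>v n" "A *\<^sub>v v = e \<cdot>\<^sub>v v"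
    using real_eigen[OF A sym] by (auto simp: n_def)
  have vv: "v \<bullet> v > 0" using v by (simp add: conjugate_square_greater_0_vec[OF v(1), simplified])
  define u0 where "u0 = (1 / sqrt (v \<bullet> v)) \<cdot>\<^sub>v v"
  define u where "u = (if u0 $ 0 > 0 then -1 else 1) \<cdot>\<^sub>v u0"
  have u0c: "u0 \<in> carrier_vec n" using v by (simp add: u0_def)
  have uc: "u \<in> carrier_vec n" using u0c by (simp add: u_def)
  have u0u0: "u0 \<bullet> u0 = 1"
    unfolding u0_def using v vv
    by (simp add: scalar_prod_smult_distrib smult_scalar_prod_distrib real_sqrt_mult[symmetric])
  have uu: "u \<bullet> u = 1"
    unfolding u_def using u0c u0u0 by (simp add: scalar_prod_smult_distrib smult_scalar_prod_distrib)
  have un0: "u $ 0 \<le> 0" using u0c by (auto simp: u_def n_def)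
  have Au: "A *\<^sub>v u = e \<cdot>\<^sub>v u"
    unfolding u_def u0_def using A v by (simp add: mult_mat_vec smult_smult_assoc mult.commute)
  obtain H where H: "H \<in> carrier_mat n n" "H\<^sup>T = H" "H * H = 1\<^sub>m n" "H *\<^sub>v unit_vec n 0 = u"
    using householder[OF uc uu un0] by (auto simp: n_def)
  define e0 :: "real vec" where "e0 = unit_vec n 0"
  have e0c: "e0 \<in> carrier_vec n" by (simp add: e0_def)
  have HHx: "H *\<^sub>v (H *\<^sub>v x) = x" if "x \<in> carrier_vec n" for x
    using that H by (simp add: assoc_mult_mat_vec[symmetric])
  have Hu: "H *\<^sub>v u = e0" using HHx[OF e0c] H(4) by (simp add: e0_def)
  have Hsc: "x \<bullet> (H *\<^sub>v y) = (H *\<^sub>v x) \<bullet> y" if "x \<in> carrier_vec n" "y \<in> carrier_vec n" for x y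
    using transpose_vec_mult_scalar[OF H(1) that(2) that(1)] H(2) by simp
  define A' where "A' = H * A * H"
  have A': "A' \<in> carrier_mat n n" using A H by (simp add: A'_def)
  have A'sym: "A'\<^sup>T = A'"
  proof -
    have HA: "H * A \<in> carrier_mat n n" using H A by simp
    have "(H * A * H)\<^sup>T = H\<^sup>T * (H * A)\<^sup>T" using transpose_mult[OF HA H(1)] .
    also have "(H * A)\<^sup>T = A\<^sup>T * H\<^sup>T" using transpose_mult[OF H(1) A] .
    finally show ?thesis unfolding A'_def using H A sym by (simp add: assoc_mult_mat)
  qed
  have HHX: "H * (H * X) = X" if "X \<in> carrier_mat n nc" for X nc
  proof -
    have "(H * H) * X = H * (H * X)" by (rule assoc_mult_mat[OF H(1) H(1) that])
    then show ?thesis using H that by simp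
  qed
  have AA': "A = H * A' * H"
  proof -
    have c: "A * H \<in> carrier_mat n n" using A H by simp
    have "H * A' = H * (H * (A * H))" unfolding A'_def using A H by (simp add: assoc_mult_mat)
    also have "\<dots> = A * H" by (rule HHX[OF c])
    finally have 1: "H * A' = A * H" .
    have "H * A' * H = A * H * H" by (simp add: 1)
    also have "\<dots> = A * (H * H)" using A H by (simp add: assoc_mult_mat)
    also have "\<dots> = A" using A H by simp
    finally show ?thesis by simp
  qed
  have A'e0: "A' *\<^sub>v e0 = e \<cdot>\<^sub>v e0"
  proof -
    have HA: "H * A \<in> carrier_mat n n" using H A by simp
    have "A' *\<^sub>v e0 = (H * A) *\<^sub>v (H *\<^sub>v e0)"
      unfolding A'_def by (rule assoc_mult_mat_vec[OF HA H(1) e0c])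
    also have "\<dots> = H *\<^sub>v (A *\<^sub>v (H *\<^sub>v e0))"
      by (rule assoc_mult_mat_vec[OF H(1) A]) (use H e0c in simp)
    finally have "A' *\<^sub>v e0 = H *\<^sub>v (A *\<^sub>v (H *\<^sub>v e0))" .
    also have "\<dots> = H *\<^sub>v (e \<cdot>\<^sub>v u)" using H(4) Au by (simp add: e0_def)
    also have "\<dots> = e \<cdot>\<^sub>v e0" using H uc Hu by (simp add: mult_mat_vec)
    finally show ?thesis .
  qed
  have A'col: "A' $$ (i, 0) = (if i = 0 then e else 0)" if "i < n" for i
  proof -
    have "A' $$ (i, 0) = (A' *\<^sub>v e0) $ i"
      using A' that by (simp add: e0_def n_def scalar_prod_right_unit)
    then show ?thesis using A'e0 that by (simp add: e0_def)
  qed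
  have A'row: "A' $$ (0, j) = (if j = 0 then e else 0)" if "j < n" for j
  proof -
    have "A' $$ (0, j) = A'\<^sup>T $$ (j, 0)" using A' that by (simp add: n_def)
    then show ?thesis using A'sym A'col[OF that] by simp
  qed
  define A3 where "A3 = mat m m (\<lambda>(i,j). A' $$ (Suc i, Suc j))"
  have A3: "A3 \<in> carrier_mat m m" by (simp add: A3_def)
  have A3sym: "A3\<^sup>T = A3"
  proof (rule eq_matI)
    fix i j assume "i < dim_row A3" "j < dim_col A3"
    hence ij: "i < m" "j < m" by (auto simp: A3_def)
    have "A' $$ (Suc j, Suc i) = A'\<^sup>T $$ (Suc i, Suc j)" using A' ij by (simp add: n_def)
    then show "A3\<^sup>T $$ (i, j) = A3 $$ (i, j)" using ij A'sym by (simp add: A3_def)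
  qed (auto simp: A3_def)
  obtain d3 p3 where IH: "char_poly A3 = (\<Prod>i<m. [:-d3 i, 1:])" "\<forall>i<m. p3 i \<in> carrier_vec m"
     "\<forall>y\<in>carrier_vec m. y \<bullet> (A3 *\<^sub>v y) = (\<Sum>i<m. d3 i * (p3 i \<bullet> y)^2)"
    using Suc.IH[OF A3 A3sym] by blast
  define d where "d i = (if i = 0 then e else d3 (i - 1))" for i
  define ext where "ext q = vec n (\<lambda>j. if j = 0 then 0 else q $ (j - 1))" for q :: "real vec"
  define p where "p i = (if i = 0 then u else H *\<^sub>v ext (p3 (i - 1)))" for i
  have cpA: "char_poly A = char_poly A'"
  proof (rule char_poly_similar)
    show "similar_mat A A'" unfolding similar_mat_def similar_mat_wit_def
      using A A' H AA' by (intro exI[of _ H]) (auto simp: Let_def)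
  qed
  define A1 :: "real mat" where "A1 = mat 1 1 (\<lambda>_. e)"
  have A'block: "A' = four_block_mat A1 (0\<^sub>m 1 m) (0\<^sub>m m 1) A3"
  proof (rule eq_matI)
    fix i j assume ij: "i < dim_row (four_block_mat A1 (0\<^sub>m 1 m) (0\<^sub>m m 1) A3)"
      "j < dim_col (four_block_mat A1 (0\<^sub>m 1 m) (0\<^sub>m m 1) A3)"
    hence i: "i < n" and j: "j < n" by (auto simp: A1_def A3_def n_def)
    show "A' $$ (i, j) = four_block_mat A1 (0\<^sub>m 1 m) (0\<^sub>m m 1) A3 $$ (i, j)"
    proof (cases "i = 0 \<or> j = 0")
      case True
      then show ?thesis using i j A'row A'col by (auto simp: A1_def A3_def n_def)
    next
      case False
      then obtain i' j' where "i = Suc i'" "j = Suc j'" by (metis not0_implies_Suc)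
      then show ?thesis using i j by (simp add: A1_def A3_def n_def)
    qed
  qed (use A' in \<open>auto simp: A1_def A3_def n_def\<close>)
  have cpA1: "char_poly A1 = [:-e, 1:]"
  proof -
    have "A1 \<in> carrier_mat 1 1" "upper_triangular A1" by (auto simp: A1_def upper_triangular_def)
    from char_poly_upper_triangular[OF this] show ?thesis by (simp add: diag_mat_def A1_def)
  qed
  have cp: "char_poly A = (\<Prod>i<n. [:-d i, 1:])"
  proof -
    have "char_poly A = char_poly A1 * char_poly A3"
      unfolding cpA A'block by (rule char_poly_four_block_zeros_col) (auto simp: A1_def A3)
    also have "\<dots> = (\<Prod>i<n. [:-d i, 1:])"
      unfolding cpA1 IH(1) n_def prod.lessThan_Suc_shift by (simp add: d_def)
    finally show ?thesis .
  qed
  have extc: "ext q \<in> carrier_vec n" for q by (simp add: ext_def)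
  have pc: "\<forall>i<n. p i \<in> carrier_vec n" using uc H extc by (auto simp: p_def)
  have quad: "y \<bullet> (A *\<^sub>v y) = (\<Sum>i<n. d i * (p i \<bullet> y)^2)" if y: "y \<in> carrier_vec n" for y
  proof -
    define z where "z = H *\<^sub>v y"
    have zc: "z \<in> carrier_vec n" using H y by (simp add: z_def)
    define z' where "z' = vec m (\<lambda>i. z $ Suc i)"
    have z'c: "z' \<in> carrier_vec m" by (simp add: z'_def)
    have HA': "H * A' \<in> carrier_mat n n" using H A' by simp
    have "A *\<^sub>v y = (H * A') *\<^sub>v (H *\<^sub>v y)"
      unfolding AA' by (rule assoc_mult_mat_vec[OF HA' H(1) y])
    also have "\<dots> = H *\<^sub>v (A' *\<^sub>v z)"
      unfolding z_def by (rule assoc_mult_mat_vec[OF H(1) A']) (use H y in simp)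
    finally have "y \<bullet> (A *\<^sub>v y) = y \<bullet> (H *\<^sub>v (A' *\<^sub>v z))" by simp
    also have "\<dots> = z \<bullet> (A' *\<^sub>v z)" unfolding z_def using Hsc y A' H by simp
    also have "\<dots> = e * (z$0)^2 + z' \<bullet> (A3 *\<^sub>v z')"
    proof -
      have "z \<bullet> (A' *\<^sub>v z) = A' $$ (0,0) * (z$0)^2 + z' \<bullet> (A3 *\<^sub>v z')"
        unfolding z'_def A3_def
        by (rule quad_split) (use A' zc A'row A'col in \<open>auto simp: n_def\<close>)
      then show ?thesis using A'row[of 0] by (simp add: n_def)
    qed
    also have "\<dots> = e * (u \<bullet> y)^2 + (\<Sum>i<m. d3 i * (p3 i \<bullet> z')^2)"
    proof -
      have "z $ 0 = e0 \<bullet> z" using zc by (simp add: e0_def n_def scalar_prod_left_unit)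
      also have "\<dots> = (H *\<^sub>v e0) \<bullet> y" unfolding z_def using Hsc e0c y by simp
      also have "\<dots> = u \<bullet> y" using H(4) by (simp add: e0_def)
      finally show ?thesis using IH(3) z'c by simp
    qed
    also have "\<dots> = (\<Sum>i<n. d i * (p i \<bullet> y)^2)"
    proof -
      have "p3 i \<bullet> z' = p (Suc i) \<bullet> y" if i: "i < m" for i
      proof -
        have p3c: "p3 i \<in> carrier_vec m" using IH(2) i by simp
        have "p3 i \<bullet> z' = ext (p3 i) \<bullet> z"
          using p3c zc unfolding ext_def z'_def scalar_prod_def
          by (simp add: n_def sum.atLeast0_lessThan_Suc_shift del: sum.op_ivl_Suc)
        also have "\<dots> = p (Suc i) \<bullet> y" unfolding z_def p_def using Hsc extc y by simp
        finally show ?thesis .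
      qed
      then show ?thesis unfolding n_def prod.lessThan_Suc_shift sum.lessThan_Suc_shift
        by (simp add: d_def p_def)
    qed
    finally show ?thesis .
  qed
  show ?case using cp pc quad unfolding n_def by blast
qed


lemma lin_left:
  fixes x :: "nat \<Rightarrow> real vec" and c :: "nat \<Rightarrow> real"
  assumes "\<forall>i<k. x i \<in> carrier_vec n" "w \<in> carrier_vec n"
  shows "vec n (\<lambda>l. \<Sum>i<k. c i * x i $ l) \<bullet> w = (\<Sum>i<k. c i * (x i \<bullet> w))"
proof -
  have "vec n (\<lambda>l. \<Sum>i<k. c i * x i $ l) \<bullet> w = (\<Sum>l=0..<n. \<Sum>i<k. c i * x i $ l * w $ l)"
    using assms by (simp add: scalar_prod_def sum_distrib_right)
  also have "\<dots> = (\<Sum>i<k. \<Sum>l=0..<n. c i * x i $ l * w $ l)" by (rule sum.swap)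
  also have "\<dots> = (\<Sum>i<k. c i * (x i \<bullet> w))"
    using assms by (intro sum.cong refl) (auto simp: scalar_prod_def sum_distrib_left mult.assoc)
  finally show ?thesis .
qed

lemma lin_right:
  fixes x :: "nat \<Rightarrow> real vec" and c :: "nat \<Rightarrow> real" and M :: "real mat"
  assumes "\<forall>i<k. x i \<in> carrier_vec n" "M \<in> carrier_mat n n"
  shows "M *\<^sub>v vec n (\<lambda>l. \<Sum>i<k. c i * x i $ l) = vec n (\<lambda>l. \<Sum>i<k. c i * (M *\<^sub>v x i) $ l)"
proof (rule eq_vecI)
  fix l assume "l < dim_vec (vec n (\<lambda>l. \<Sum>i<k. c i * (M *\<^sub>v x i) $ l))"
  hence l: "l < n" by simp
  have "(M *\<^sub>v vec n (\<lambda>l. \<Sum>i<k. c i * x i $ l)) $ l = row M l \<bullet> vec n (\<lambda>l. \<Sum>i<k. c i * x i $ l)"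
    using assms l by simp
  also have "\<dots> = vec n (\<lambda>l. \<Sum>i<k. c i * x i $ l) \<bullet> row M l"
    using assms l by (intro comm_scalar_prod[of _ n]) auto
  also have "\<dots> = (\<Sum>i<k. c i * (x i \<bullet> row M l))"
    by (rule lin_left) (use assms l in auto)
  also have "\<dots> = (\<Sum>i<k. c i * (M *\<^sub>v x i) $ l)"
    using assms l by (intro sum.cong refl) (auto simp: comm_scalar_prod[of _ n])
  finally show "(M *\<^sub>v vec n (\<lambda>l. \<Sum>i<k. c i * x i $ l)) $ l = vec n (\<lambda>l. \<Sum>i<k. c i * (M *\<^sub>v x i) $ l) $ l"
    using l by simp
qed (use assms in simp)

theorem theorem6p2:
  fixes n k :: nat and M :: "real mat" and S :: "nat \<Rightarrow> nat set" and \<alpha> :: "nat \<Rightarrow> real"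
  assumes "gen_modularity_matrix n M"
    and "k \<ge> 1"
    and "\<forall>i<k. S i \<subseteq> {0..<n} \<and> S i \<noteq> {}"
    and "\<forall>i<k. \<forall>j<k. i \<noteq> j \<longrightarrow> S i \<inter> S j = {}"
    and "\<forall>i<k. Qmod M (S i) (S i) > 0"
    and "\<forall>i<k. \<forall>j<k. i \<noteq> j \<longrightarrow> Qmod M (S i) (S j) < 0"
    and "\<forall>i<k. \<alpha> i > 0"
    and "\<forall>i<k. \<alpha> i * Qmod M (S i) (S i) > (\<Sum>j\<in>{0..<k} - {i}. \<alpha> j * \<bar>Qmod M (S i) (S j)\<bar>)"
  shows "num_pos_eigenvalues M \<ge> k"
proof -
  from assms(1) obtain A0 Delta v \<sigma> where gm: "adjacency_matrix n A0" "Delta \<in> carrier_mat n n"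
    "diagonal_mat Delta" "v \<in> carrier_vec n" "M = A0 + Delta - \<sigma> \<cdot>\<^sub>m outer_prod v v"
    unfolding gen_modularity_matrix_def by blast
  have A0: "A0 \<in> carrier_mat n n" "A0\<^sup>T = A0" using gm(1) by (auto simp: adjacency_matrix_def sym_mat_def)
  have op: "outer_prod v v \<in> carrier_mat n n" using gm(4) by (simp add: outer_prod_def)
  have Mc: "M \<in> carrier_mat n n" unfolding gm(5) using op by (intro minus_carrier_mat smult_carrier_mat)
  have Mentry: "M $$ (i,j) = A0 $$ (i,j) + Delta $$ (i,j) - \<sigma> * (v $ i * v $ j)" if "i < n" "j < n" for i j
    using gm A0 op that by (simp add: outer_prod_def)
  have Msym: "M\<^sup>T = M"
  proof (rule eq_matI)
    fix i j assume "i < dim_row M" "j < dim_col M"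
    hence ij: "i < n" "j < n" using Mc by auto
    have "A0 $$ (j, i) = A0\<^sup>T $$ (i, j)" using A0(1) ij by simp
    hence a: "A0 $$ (j, i) = A0 $$ (i, j)" using A0(2) by simp
    have d: "Delta $$ (j, i) = Delta $$ (i, j)"
      using gm(2,3) ij by (cases "i = j") (auto simp: diagonal_mat_def)
    show "M\<^sup>T $$ (i, j) = M $$ (i, j)" using Mc ij by (simp add: Mentry a d mult.commute)
  qed (use Mc in auto)
  obtain d p where sp: "char_poly M = (\<Prod>i<n. [:-d i, 1:])" "\<forall>i<n. p i \<in> carrier_vec n"
     "\<forall>y\<in>carrier_vec n. y \<bullet> (M *\<^sub>v y) = (\<Sum>i<n. d i * (p i \<bullet> y)^2)"
    using spectral[OF Mc Msym] by blast
  have np: "num_pos_eigenvalues M = card {i. i < n \<and> d i > 0}"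
    by (rule num_pos_from_factor[OF sp(1)])
  define P where "P = {i. i < n \<and> d i > 0}"
  define x where "x j = charvec n (S j)" for j
  have xc: "\<forall>j<k. x j \<in> carrier_vec n" by (simp add: x_def charvec_def)
  have Q: "Qmod M (S i) (S j) = x i \<bullet> (M *\<^sub>v x j)" for i j
    using Mc by (simp add: Qmod_def x_def)
  show ?thesis
  proof (rule ccontr)
    assume "\<not> k \<le> num_pos_eigenvalues M"
    hence lt: "card P < card {..<k}" unfolding np P_def by simp
    obtain c where c: "\<exists>j\<in>{..<k}. c j \<noteq> 0" "\<forall>i\<in>P. (\<Sum>j\<in>{..<k}. (p i \<bullet> x j) * c j) = 0"
      using hom_sys[of P "{..<k}" "\<lambda>i j. p i \<bullet> x j"] lt by (auto simp: P_def)
    define y where "y = vec n (\<lambda>l. \<Sum>j<k. c j * x j $ l)"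
    have yc: "y \<in> carrier_vec n" by (simp add: y_def)
    have My: "M *\<^sub>v y = vec n (\<lambda>l. \<Sum>j<k. c j * (M *\<^sub>v x j) $ l)"
      unfolding y_def by (rule lin_right[OF xc Mc])
    have Mxc: "\<forall>j<k. M *\<^sub>v x j \<in> carrier_vec n" using Mc xc by auto
    have "y \<bullet> (M *\<^sub>v y) = (\<Sum>i<k. c i * (x i \<bullet> (M *\<^sub>v y)))"
      unfolding y_def by (rule lin_left[OF xc]) (use Mc in simp)
    also have "\<dots> = (\<Sum>i<k. \<Sum>j<k. c i * c j * Qmod M (S i) (S j))"
    proof (intro sum.cong refl)
      fix i assume i: "i \<in> {..<k}"
      have "x i \<bullet> (M *\<^sub>v y) = (M *\<^sub>v y) \<bullet> x i"
        using xc i Mc yc by (intro comm_scalar_prod[of _ n]) auto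
      also have "\<dots> = (\<Sum>j<k. c j * ((M *\<^sub>v x j) \<bullet> x i))"
        unfolding My by (rule lin_left[OF Mxc]) (use xc i in auto)
      also have "\<dots> = (\<Sum>j<k. c j * Qmod M (S i) (S j))"
        unfolding Q using xc Mxc i by (intro sum.cong refl) (auto simp: comm_scalar_prod[of _ n])
      finally show "c i * (x i \<bullet> (M *\<^sub>v y)) = (\<Sum>j<k. c i * c j * Qmod M (S i) (S j))"
        by (simp add: sum_distrib_left mult.assoc)
    qed
    finally have yMy: "y \<bullet> (M *\<^sub>v y) = (\<Sum>i<k. \<Sum>j<k. c i * c j * Qmod M (S i) (S j))" .
    have Qsym: "\<forall>i<k. \<forall>j<k. Qmod M (S i) (S j) = Qmod M (S j) (S i)"
    proof (intro allI impI)
      fix i j assume ij: "i < k" "j < k"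
      have "x i \<bullet> (M *\<^sub>v x j) = (M\<^sup>T *\<^sub>v x i) \<bullet> x j"
        using transpose_vec_mult_scalar[OF Mc, of "x j" "x i"] xc ij by simp
      also have "\<dots> = x j \<bullet> (M *\<^sub>v x i)"
        unfolding Msym using xc ij Mc by (intro comm_scalar_prod[of _ n]) auto
      finally show "Qmod M (S i) (S j) = Qmod M (S j) (S i)" unfolding Q .
    qed
    have pos: "y \<bullet> (M *\<^sub>v y) > 0"
      unfolding yMy by (rule quad_pos[OF Qsym assms(7) assms(8)]) (use c(1) in auto)
    have "y \<bullet> (M *\<^sub>v y) = (\<Sum>i<n. d i * (p i \<bullet> y)^2)" using sp(3) yc by simp
    also have "\<dots> \<le> 0"
    proof (intro sum_nonpos)
      fix i assume i: "i \<in> {..<n}"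
      show "d i * (p i \<bullet> y)^2 \<le> 0"
      proof (cases "d i > 0")
        case True
        hence "i \<in> P" using i by (simp add: P_def)
        have "p i \<bullet> y = y \<bullet> p i" using sp(2) i yc by (intro comm_scalar_prod[of _ n]) auto
        also have "\<dots> = (\<Sum>j<k. c j * (x j \<bullet> p i))"
          unfolding y_def by (rule lin_left[OF xc]) (use sp(2) i in auto)
        also have "\<dots> = (\<Sum>j<k. (p i \<bullet> x j) * c j)"
          using xc sp(2) i by (intro sum.cong refl) (auto simp: comm_scalar_prod[of _ n])
        also have "\<dots> = 0" using c(2) \<open>i \<in> P\<close> by simp
        finally show ?thesis by simp
      next
        case False
        then show ?thesis by (simp add: mult_nonpos_nonneg)
      qed
    qed
    finally show False using pos by simp
  qed
qed

end
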